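(* Let $M,\widetilde M\in B$ with $M\le'\widetilde M$. Then there exist a strictly increasing map $\varphi\colon\mathbb{N}\to\mathbb{N}$, a monomial $N\in B_1$ and a monomial $P=z_{t_1}\cdots z_{t_k}$ ($k\ge0$) in the odd variables such that $N\,\widetilde\varphi(M)\,P\equiv\widetilde M\pmod I$.
   Context: Let $D$ be an infinite commutative unital integral domain; $Y=\{y_1,y_2,\dots\}$ (even) and $Z=\{z_1,z_2,\dots\}$ (odd) disjoint sets of variables, $X=Y\cup Z$, $D\langle X\rangle$ the free unital associative $D$-algebra, $L\langle X\rangle$ its Lie subalgebra (bracket $[a,b]=ab-ba$) generated by $X$ with induced grading. An ideal of weak graded identities is a two-sided ideal of $D\langle X\rangle$ closed under all endomorphisms mapping each $y_i$ into $L\langle X\rangle^{(0)}$ and each $z_i$ into $L\langle X\rangle^{(1)}$; $I$ is the smallest such ideal containing $y_1y_2-y_2y_1$, $z_1z_2z_3-z_3z_2z_1$, $y_1z_1+z_1y_1$. $B$ is the set of monomials $y_{a_1}\cdots y_{a_k}$ ($k\ge0$, $a_1\le\dots\le a_k$) — forming $B_1$ — and $y_{a_1}\cdots y_{a_k}z_{c_1}z_{d_1}z_{c_2}z_{d_2}\cdots z_{c_m}z_{d_m}$ or the same word with the final $z_{d_m}$ omitted, where $m\ge1$, $a$'s, $c$'s and present $d$'s nondecreasing — forming $B_2$. Sequences: $V(Q_1)$ is the set of sequences $(s_i)_{i\ge1}$ in $\mathbb{N}_0$ with finitely many nonzero terms; triples of such sequences are identified with sequences $(w_i)_{i\ge1}$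 in $\mathbb{N}_0^3$. Define $\xi(y_{a_1}\cdots y_{a_k})=u^{(1)}$ and $\xi(y_{a_1}\cdots y_{a_k}z_{c_1}z_{d_1}\cdots)=(u^{(1)},u^{(2)},u^{(3)})$, where $u^{(1)}_i=\#\{j:a_j=i\}$, $u^{(2)}_i=\#\{j:c_j=i\}$, $u^{(3)}_i=\#\{j:d_j=i\}$. For sequences $u=(u_i),v=(v_i)$ in $\mathbb{N}_0^n$ write $u\le_s v$ iff there is a strictly increasing $\psi\colon\mathbb{N}\to\mathbb{N}$ with $u_i\le v_{\psi(i)}$ componentwise for all $i$. For $M,\widetilde M\in B$, $M\le'\widetilde M$ iff $M,\widetilde M$ lie both in $B_1$ or both in $B_2$ and $\xi(M)\le_s\xi(\widetilde M)$. For strictly increasing $\varphi$, $\widetilde\varphi$ is the substitution $y_i\mapsto y_{\varphi(i)}$, $z_i\mapsto z_{\varphi(i)}$. *)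

theory Defs
  imports Main
begin

text \<open>Variables: Y i is the even variable y_(i+1), Z i the odd variable z_(i+1)
  (indices shifted to start at 0).\<close>
datatype var = Y nat | Z nat

text \<open>Elements of D<X> are finitely supported coefficient functions on words.\<close>
type_synonym 'd fa = "var list \<Rightarrow> 'd"

definition fa_set :: "('d::zero) fa set" where
  "fa_set = {p. finite {w. p w \<noteq> 0}}"

definition fzero :: "('d::zero) fa" where
  "fzero = (\<lambda>w. 0)"

definition fplus :: "('d::plus) fa \<Rightarrow> 'd fa \<Rightarrow> 'd fa" where
  "fplus p q = (\<lambda>w. p w + q w)"

definition fminus :: "('d::minus) fa \<Rightarrow> 'd fa \<Rightarrow> 'd fa" where
  "fminus p q = (\<lambda>w. p w - q w)"

definition fsmul :: "('d::times) \<Rightarrow> 'd fa \<Rightarrow> 'd fa" where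
  "fsmul c p = (\<lambda>w. c * p w)"

definition fmul :: "('d::comm_semiring_1) fa \<Rightarrow> 'd fa \<Rightarrow> 'd fa" where
  "fmul p q = (\<lambda>w. \<Sum>i\<le>length w. p (take i w) * q (drop i w))"

definition monom :: "var list \<Rightarrow> ('d::comm_semiring_1) fa" where
  "monom u = (\<lambda>w. if w = u then 1 else 0)"

definition fone :: "('d::comm_semiring_1) fa" where
  "fone = monom []"

definition wprod :: "('d::comm_semiring_1) fa list \<Rightarrow> 'd fa" where
  "wprod ps = foldr fmul ps fone"

definition subst :: "(var \<Rightarrow> ('d::comm_semiring_1) fa) \<Rightarrow> 'd fa \<Rightarrow> 'd fa" where
  "subst \<sigma> p = (\<lambda>u. \<Sum>w\<in>{w. p w \<noteq> 0}. p w * wprod (map \<sigma> w) u)"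

definition bracket :: "('d::comm_ring_1) fa \<Rightarrow> 'd fa \<Rightarrow> 'd fa" where
  "bracket a b = fminus (fmul a b) (fmul b a)"

inductive_set lie_gen :: "('d::comm_ring_1) fa set" where
  var: "monom [x] \<in> lie_gen"
| zero: "fzero \<in> lie_gen"
| add: "a \<in> lie_gen \<Longrightarrow> b \<in> lie_gen \<Longrightarrow> fplus a b \<in> lie_gen"
| smul: "a \<in> lie_gen \<Longrightarrow> fsmul c a \<in> lie_gen"
| brk: "a \<in> lie_gen \<Longrightarrow> b \<in> lie_gen \<Longrightarrow> bracket a b \<in> lie_gen"

definition zdeg :: "var list \<Rightarrow> nat" where
  "zdeg w = length [c. Z c \<leftarrow> w]"

definition lie_even :: "('d::comm_ring_1) fa set" where
  "lie_even = {p \<in> lie_gen. \<forall>w. p w \<noteq> 0 \<longrightarrow> even (zdeg w)}"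

definition lie_odd :: "('d::comm_ring_1) fa set" where
  "lie_odd = {p \<in> lie_gen. \<forall>w. p w \<noteq> 0 \<longrightarrow> odd (zdeg w)}"

definition admissible :: "(var \<Rightarrow> ('d::comm_ring_1) fa) \<Rightarrow> bool" where
  "admissible \<sigma> \<longleftrightarrow> (\<forall>i. \<sigma> (Y i) \<in> lie_even \<and> \<sigma> (Z i) \<in> lie_odd)"

definition weak_graded_ideal :: "('d::comm_ring_1) fa set \<Rightarrow> bool" where
  "weak_graded_ideal J \<longleftrightarrow>
     J \<subseteq> fa_set \<and> fzero \<in> J \<and>
     (\<forall>p\<in>J. \<forall>q\<in>J. fplus p q \<in> J) \<and>
     (\<forall>a\<in>fa_set. \<forall>p\<in>J. \<forall>b\<in>fa_set. fmul (fmul a p) b \<in> J) \<and>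
     (\<forall>\<sigma> p. admissible \<sigma> \<longrightarrow> p \<in> J \<longrightarrow> subst \<sigma> p \<in> J)"

definition gens_I :: "('d::comm_ring_1) fa set" where
  "gens_I = {fminus (monom [Y 0, Y 1]) (monom [Y 1, Y 0]),
             fminus (monom [Z 0, Z 1, Z 2]) (monom [Z 2, Z 1, Z 0]),
             fplus (monom [Y 0, Z 0]) (monom [Z 0, Y 0])}"

definition ideal_I :: "('d::comm_ring_1) fa set" where
  "ideal_I = \<Inter> {J. weak_graded_ideal J \<and> gens_I \<subseteq> J}"

definition in_B1 :: "var list \<Rightarrow> bool" where
  "in_B1 w \<longleftrightarrow> (\<exists>as. w = map Y as \<and> sorted as)"

definition in_B2 :: "var list \<Rightarrow> bool" where
  "in_B2 w \<longleftrightarrow> (\<exists>as cs. w = map Y as @ map Z cs \<and> sorted as \<and> cs \<noteq> [] \<and>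
      sorted (nths cs {i. even i}) \<and> sorted (nths cs {i. odd i}))"

definition in_B :: "var list \<Rightarrow> bool" where
  "in_B w \<longleftrightarrow> in_B1 w \<or> in_B2 w"

definition yidx :: "var list \<Rightarrow> nat list" where
  "yidx w = [a. Y a \<leftarrow> w]"

definition zidx :: "var list \<Rightarrow> nat list" where
  "zidx w = [c. Z c \<leftarrow> w]"

text \<open>xi as a sequence of tuples (lists of length 1 for B1, length 3 for B2).\<close>
definition xi :: "var list \<Rightarrow> nat \<Rightarrow> nat list" where
  "xi w = (if in_B1 w then (\<lambda>i. [count_list (yidx w) i])
           else (\<lambda>i. [count_list (yidx w) i,
                       count_list (nths (zidx w) {j. even j}) i,
                       count_list (nths (zidx w) {j. odd j}) i]))"

definition le_s :: "(nat \<Rightarrow> nat list) \<Rightarrow> (nat \<Rightarrow> nat list) \<Rightarrow> bool" where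
  "le_s u v \<longleftrightarrow> (\<exists>\<psi>. strict_mono \<psi> \<and> (\<forall>i. list_all2 (\<le>) (u i) (v (\<psi> i))))"

definition le_B :: "var list \<Rightarrow> var list \<Rightarrow> bool" where
  "le_B M M' \<longleftrightarrow> ((in_B1 M \<and> in_B1 M') \<or> (in_B2 M \<and> in_B2 M')) \<and> le_s (xi M) (xi M')"

fun rename :: "(nat \<Rightarrow> nat) \<Rightarrow> var \<Rightarrow> var" where
  "rename \<phi> (Y i) = Y (\<phi> i)"
| "rename \<phi> (Z i) = Z (\<phi> i)"

definition phi_subst :: "(nat \<Rightarrow> nat) \<Rightarrow> ('d::comm_ring_1) fa \<Rightarrow> 'd fa" where
  "phi_subst \<phi> = subst (\<lambda>v. monom [rename \<phi> v])"

end

theory Submission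
  imports Defs "HOL-Library.Multiset"
begin


lemma fmul_monom: "fmul (monom u) (monom v) = (monom (u@v) :: ('d::comm_semiring_1) fa)"
proof (rule ext)
  fix w
  have c: "monom u (take i w) * monom v (drop i w) = (if i = length u \<and> w = u@v then 1 else (0::'d))"
    if "i \<in> {..length w}" for i
  proof -
    from that have il: "i \<le> length w" by simp
    have "(take i w = u \<and> drop i w = v) \<longleftrightarrow> (i = length u \<and> w = u@v)"
    proof
      assume h: "take i w = u \<and> drop i w = v"
      then have "w = u @ v" by (metis append_take_drop_id)
      moreover have "length u = i" using h il by auto
      ultimately show "i = length u \<and> w = u@v" by simp
    next
      assume "i = length u \<and> w = u@v" then show "take i w = u \<and> drop i w = v" by simp
    qed
    then show ?thesis unfolding monom_def by auto
  qed
  have "fmul (monom u) (monom v) w = (\<Sum>i\<le>length w. if i = length u \<and> w = u@v then 1 else (0::'d))"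
    unfolding fmul_def using c by (rule sum.cong[OF refl])
  also have "\<dots> = monom (u@v) w" by (auto simp: monom_def)
  finally show "fmul (monom u) (monom v) w = (monom (u@v) :: 'd fa) w" .
qed

lemma fmul_minus_right: fixes a p q :: "('d::comm_ring_1) fa" shows "fmul a (fminus p q) = fminus (fmul a p) (fmul a q)"
  unfolding fmul_def fminus_def by (simp add: sum_subtractf right_diff_distrib)

lemma fmul_minus_left: fixes a p q :: "('d::comm_ring_1) fa" shows "fmul (fminus p q) a = fminus (fmul p a) (fmul q a)"
  unfolding fmul_def fminus_def by (simp add: sum_subtractf left_diff_distrib)

lemma monom_fa: "(monom u :: ('d::comm_semiring_1) fa) \<in> fa_set"
proof -
  have "{w. monom u w \<noteq> (0::'d)} \<subseteq> {u}" by (auto simp: monom_def)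
  then show ?thesis unfolding fa_set_def by (auto intro: finite_subset)
qed

lemma wprod_monoms: "wprod (map (\<lambda>v. monom [g v]) w) = (monom (map g w) :: ('d::comm_semiring_1) fa)"
  by (induct w) (simp_all add: wprod_def fone_def fmul_monom)

lemma subst_monom:
  "subst (\<lambda>v. monom [g v]) (monom u) = (monom (map g u) :: ('d::comm_ring_1) fa)"
proof -
  have "{w. monom u w \<noteq> (0::'d)} = {u}" by (auto simp: monom_def)
  then show ?thesis unfolding subst_def by (simp add: wprod_monoms monom_def[of u])
qed

lemma subst_monom_diff:
  assumes "u \<noteq> v"
  shows "subst (\<lambda>x. monom [g x]) (fminus (monom u) (monom v)) =
     fminus (monom (map g u)) (monom (map g v) :: ('d::comm_ring_1) fa)"
proof (rule ext)
  fix x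
  let ?p = "fminus (monom u) (monom v) :: 'd fa"
  have pv: "?p w = (if w = u then 1 else if w = v then -1 else 0)" for w
    using assms by (simp add: fminus_def monom_def)
  have S: "{w. ?p w \<noteq> 0} = {u, v}" unfolding pv by auto
  have "subst (\<lambda>x. monom [g x]) ?p x = ?p u * wprod (map (\<lambda>x. monom [g x]) u) x + ?p v * wprod (map (\<lambda>x. monom [g x]) v) x"
    unfolding subst_def S using assms by simp
  also have "\<dots> = monom (map g u) x - monom (map g v) x"
    unfolding pv wprod_monoms using assms by simp
  finally show "subst (\<lambda>x. monom [g x]) ?p x = fminus (monom (map g u)) (monom (map g v) :: 'd fa) x"
    by (simp add: fminus_def)
qed

lemma phi_subst_monom: "phi_subst \<phi> (monom M) = (monom (map (rename \<phi>) M) :: ('d::comm_ring_1) fa)"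
  unfolding phi_subst_def by (rule subst_monom)

lemma I_gens: "gens_I \<subseteq> (ideal_I :: ('d::comm_ring_1) fa set)"
  unfolding ideal_I_def by auto

lemma I_plus: "p \<in> ideal_I \<Longrightarrow> q \<in> ideal_I \<Longrightarrow> fplus p q \<in> (ideal_I :: ('d::comm_ring_1) fa set)"
  unfolding ideal_I_def weak_graded_ideal_def by auto

lemma I_zero: "fzero \<in> (ideal_I :: ('d::comm_ring_1) fa set)"
  unfolding ideal_I_def weak_graded_ideal_def by auto

lemma I_mul: "p \<in> ideal_I \<Longrightarrow> a \<in> fa_set \<Longrightarrow> b \<in> fa_set \<Longrightarrow> fmul (fmul a p) b \<in> (ideal_I :: ('d::comm_ring_1) fa set)"
  unfolding ideal_I_def weak_graded_ideal_def by auto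

lemma I_subst: "p \<in> ideal_I \<Longrightarrow> admissible \<sigma> \<Longrightarrow> subst \<sigma> p \<in> (ideal_I :: ('d::comm_ring_1) fa set)"
  unfolding ideal_I_def weak_graded_ideal_def by auto

lemma admissible_rename: "admissible (\<lambda>x. monom [rename f x] :: ('d::comm_ring_1) fa)"
proof -
  have v: "(monom [x] :: 'd fa) \<in> lie_gen" for x by (rule lie_gen.var)
  have w: "(monom [x] :: 'd fa) w \<noteq> 0 \<Longrightarrow> w = [x]" for x w by (cases "w = [x]") (simp_all add: monom_def)
  have zY: "zdeg [Y a] = 0" for a by (simp add: zdeg_def)
  have zZ: "zdeg [Z a] = 1" for a by (simp add: zdeg_def)
  show ?thesis unfolding admissible_def lie_even_def lie_odd_def
    using v w zY zZ by fastforce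
qed

definition R :: "('d::comm_ring_1) itself \<Rightarrow> var list \<Rightarrow> var list \<Rightarrow> bool" where
  "R T u v \<longleftrightarrow> fminus (monom u) (monom v) \<in> (ideal_I :: ('d::comm_ring_1) fa set)"

lemma R_refl: "R (T::('d::comm_ring_1) itself) u u"
proof -
  have "fminus (monom u) (monom u) = (fzero :: 'd fa)" by (auto simp: fminus_def fzero_def)
  then show ?thesis unfolding R_def using I_zero by metis
qed

lemma R_trans: "R (T::('d::comm_ring_1) itself) u v \<Longrightarrow> R T v w \<Longrightarrow> R T u w"
proof -
  assume a: "R T u v" "R T v w"
  have "fminus (monom u) (monom w) = fplus (fminus (monom u) (monom v)) (fminus (monom v) (monom w) :: 'd fa)"
    by (auto simp: fminus_def fplus_def)
  then show ?thesis using a I_plus unfolding R_def by metis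
qed

lemma R_ctx: "R (T::('d::comm_ring_1) itself) u v \<Longrightarrow> R T (p@u@q) (p@v@q)"
proof -
  assume a: "R T u v"
  have "fmul (fmul (monom p) (fminus (monom u) (monom v))) (monom q) = fminus (monom (p@u@q)) (monom (p@v@q) :: 'd fa)"
    by (simp add: fmul_minus_left fmul_minus_right fmul_monom)
  then show ?thesis using a I_mul[OF _ monom_fa monom_fa] unfolding R_def by metis
qed

lemma R_Y: "R (T::('d::comm_ring_1) itself) [Y a, Y b] [Y b, Y a]"
proof -
  let ?f = "\<lambda>i::nat. if i = 0 then a else b"
  have g: "fminus (monom [Y 0, Y 1]) (monom [Y 1, Y 0]) \<in> (ideal_I :: 'd fa set)"
    using I_gens unfolding gens_I_def by auto
  have "subst (\<lambda>x. monom [rename ?f x]) (fminus (monom [Y 0, Y 1]) (monom [Y 1, Y 0]))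
      = fminus (monom (map (rename ?f) [Y 0, Y 1])) (monom (map (rename ?f) [Y 1, Y 0]) :: 'd fa)"
    by (rule subst_monom_diff) simp
  then show ?thesis using I_subst[OF g admissible_rename[of ?f]] unfolding R_def by simp
qed

lemma R_Z: "R (T::('d::comm_ring_1) itself) [Z a, Z b, Z c] [Z c, Z b, Z a]"
proof -
  let ?f = "\<lambda>i::nat. if i = 0 then a else if i = 1 then b else c"
  have g: "fminus (monom [Z 0, Z 1, Z 2]) (monom [Z 2, Z 1, Z 0]) \<in> (ideal_I :: 'd fa set)"
    using I_gens unfolding gens_I_def by auto
  have "subst (\<lambda>x. monom [rename ?f x]) (fminus (monom [Z 0, Z 1, Z 2]) (monom [Z 2, Z 1, Z 0]))
      = fminus (monom (map (rename ?f) [Z 0, Z 1, Z 2])) (monom (map (rename ?f) [Z 2, Z 1, Z 0]) :: 'd fa)"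
    by (rule subst_monom_diff) simp
  then show ?thesis using I_subst[OF g admissible_rename[of ?f]] unfolding R_def by simp
qed



function il :: "nat list \<Rightarrow> nat list \<Rightarrow> nat list" where
  "il [] os = os"
| "il (e#es) os = e # il os es"
  by pat_completeness auto
termination by (relation "measure (\<lambda>(a,b). length a + length b)") auto

lemma il_Cons2: "il (e#es) (r#os) = e # r # il es os" by simp

lemma il_map: "map f (il E Od) = il (map f E) (map f Od)"
  by (induct E Od rule: il.induct) simp_all

lemma il_app: "length E = length Od \<Longrightarrow> il (E@A) (Od@B) = il E Od @ il A B"
proof (induct E arbitrary: Od)
  case Nil then show ?case by simp
next
  case (Cons e E) then show ?case by (cases Od) auto
qed

lemma il_app2: assumes l: "length E = Suc (length Od)" shows "il (E@A) (Od@B) = il E Od @ il B A"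
proof (cases E)
  case Nil then show ?thesis using l by simp
next
  case (Cons e E1)
  from l have "length Od = length E1" using Cons by simp
  then show ?thesis using Cons by (simp add: il_app)
qed

lemma il_swapE: "length (p@a#b#q) \<le> Suc (length Od) \<Longrightarrow>
  \<exists>u v r. il (p@a#b#q) Od = u@[a,r,b]@v \<and> il (p@b#a#q) Od = u@[b,r,a]@v"
proof (induct p arbitrary: Od)
  case Nil
  then obtain r O1 where Od: "Od = r#O1" by (cases Od) auto
  show ?case by (rule exI[of _ "[]"], rule exI[of _ "il O1 q"], rule exI[of _ r]) (simp add: Od)
next
  case (Cons x p)
  then obtain r O1 where Od: "Od = r#O1" by (cases Od) auto
  with Cons.prems have "length (p@a#b#q) \<le> Suc (length O1)" by simp
  from Cons.hyps[OF this] obtain u v r' where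
    h: "il (p@a#b#q) O1 = u@[a,r',b]@v" "il (p@b#a#q) O1 = u@[b,r',a]@v" by blast
  show ?case by (rule exI[of _ "x#r#u"], rule exI[of _ v], rule exI[of _ r']) (simp add: Od h)
qed

lemma il_swapO: "length (p@a#b#q) \<le> length E \<Longrightarrow>
  \<exists>u v e. il E (p@a#b#q) = u@[a,e,b]@v \<and> il E (p@b#a#q) = u@[b,e,a]@v"
proof -
  assume l: "length (p@a#b#q) \<le> length E"
  then obtain e E1 where E: "E = e#E1" by (cases E) auto
  with l have "length (p@a#b#q) \<le> Suc (length E1)" by simp
  from il_swapE[OF this] obtain u v r where
    h: "il (p@a#b#q) E1 = u@[a,r,b]@v" "il (p@b#a#q) E1 = u@[b,r,a]@v" by blast
  show ?thesis by (rule exI[of _ "e#u"], rule exI[of _ v], rule exI[of _ r]) (simp add: E h)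
qed

lemma nths_even_Cons: "nths (x#xs) {j. even j} = x # nths xs {j. odd j}"
  by (simp add: nths_Cons)

lemma nths_odd_Cons: "nths (x#xs) {j. odd j} = nths xs {j. even j}"
  by (simp add: nths_Cons)

lemma il_nths: "cs = il (nths cs {j. even j}) (nths cs {j. odd j}) \<and>
   (length (nths cs {j. even j}) = length (nths cs {j. odd j}) \<or>
    length (nths cs {j. even j}) = Suc (length (nths cs {j. odd j})))"
  by (induct cs) (auto simp: nths_even_Cons nths_odd_Cons)

lemma perm_gen:
  fixes F :: "nat list \<Rightarrow> 'b" and xs ys :: "nat list"
  assumes refl: "\<And>x. Q x x" and trans: "\<And>x y z. Q x y \<Longrightarrow> Q y z \<Longrightarrow> Q x z"
    and sw: "\<And>p a b q. length (p@a#b#q) = n \<Longrightarrow> Q (F (p@a#b#q)) (F (p@b#a#q))"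
    and len: "length xs = n" and ms: "mset xs = mset ys"
  shows "Q (F xs) (F ys)"
proof -
  define Q2 where "Q2 x y \<longleftrightarrow> Q x y \<and> Q y x" for x y
  have r2: "Q2 x x" for x unfolding Q2_def using refl by auto
  have t2: "Q2 x y \<Longrightarrow> Q2 y z \<Longrightarrow> Q2 x z" for x y z unfolding Q2_def using trans by blast
  have s2: "length (p@a#b#q) = n \<Longrightarrow> Q2 (F (p@a#b#q)) (F (p@b#a#q))" for p a b q
    unfolding Q2_def using sw[of p a b q] sw[of p b a q] by simp
  have ins: "length (p @ x # zs) = n \<Longrightarrow> Q2 (F (p @ x # zs)) (F (p @ insort x zs))" for p x zs
  proof (induct zs arbitrary: p)
    case Nil then show ?case using r2 by simp
  next
    case (Cons y zs)
    show ?case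
    proof (cases "x \<le> y")
      case True then show ?thesis using r2 by simp
    next
      case False
      have a: "Q2 (F (p @ x # y # zs)) (F (p @ y # x # zs))" using s2 Cons.prems by simp
      have "length ((p@[y]) @ x # zs) = n" using Cons.prems by simp
      from Cons.hyps[OF this] have b: "Q2 (F (p @ y # x # zs)) (F (p @ y # insort x zs))" by simp
      show ?thesis using t2[OF a b] False by simp
    qed
  qed
  have srt: "length (p @ xs) = n \<Longrightarrow> Q2 (F (p @ xs)) (F (p @ sort xs))" for p xs
  proof (induct xs arbitrary: p)
    case Nil then show ?case using r2 by simp
  next
    case (Cons x xs)
    have "length ((p@[x]) @ xs) = n" using Cons.prems by simp
    from Cons.hyps[OF this] have a: "Q2 (F (p @ x # xs)) (F (p @ x # sort xs))" by simp
    have "length (p @ x # sort xs) = n" using Cons.prems by simp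
    from ins[OF this] have b: "Q2 (F (p @ x # sort xs)) (F (p @ insort x (sort xs)))" .
    show ?case using t2[OF a b] by simp
  qed
  have "length ys = n" using len ms mset_eq_length by metis
  have e: "sort xs = sort ys" using ms by (metis sorted_list_of_multiset_mset)
  have "Q2 (F xs) (F (sort xs))" using srt[of "[]" xs] len by simp
  moreover have "Q2 (F ys) (F (sort ys))" using srt[of "[]" ys] \<open>length ys = n\<close> by simp
  ultimately show ?thesis using e t2 unfolding Q2_def by metis
qed

lemma count_map_inj: "inj f \<Longrightarrow> count_list (map f xs) (f i) = count_list xs i"
  by (induct xs) (auto dest: injD)

lemma count_map_notin: "j \<notin> range f \<Longrightarrow> count_list (map f xs) j = 0"
  by (induct xs) auto

lemma sub_map:
  assumes "inj f" "\<forall>i. count_list xs i \<le> count_list ys (f i)"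
  shows "\<exists>zs. mset (map f xs @ zs) = mset ys"
proof -
  have "mset (map f xs) \<subseteq># mset ys"
    unfolding subseteq_mset_def
  proof
    fix j
    show "count (mset (map f xs)) j \<le> count (mset ys) j"
    proof (cases "j \<in> range f")
      case True then obtain i where "j = f i" by auto
      then show ?thesis using assms by (metis count_mset count_map_inj)
    next
      case False then show ?thesis by (metis count_mset count_map_notin le0)
    qed
  qed
  moreover obtain zs where "mset zs = mset ys - mset (map f xs)" using ex_mset by blast
  ultimately show ?thesis by (intro exI[of _ zs]) simp
qed

lemma yidx_Y[simp]: "yidx (map Y as) = as" by (induct as) (simp_all add: yidx_def)
lemma yidx_Z[simp]: "yidx (map Z as) = []" by (induct as) (simp_all add: yidx_def)
lemma yidx_app[simp]: "yidx (xs @ ys) = yidx xs @ yidx ys" by (simp add: yidx_def)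
lemma zidx_Y[simp]: "zidx (map Y as) = []" by (induct as) (simp_all add: zidx_def)
lemma zidx_Z[simp]: "zidx (map Z as) = as" by (induct as) (simp_all add: zidx_def)
lemma zidx_app[simp]: "zidx (xs @ ys) = zidx xs @ zidx ys" by (simp add: zidx_def)

lemma not_B1: "cs \<noteq> [] \<Longrightarrow> \<not> in_B1 (map Y as @ map Z cs)"
  unfolding in_B1_def by (metis zidx_Y zidx_Z zidx_app append_Nil)



lemma R_Yperm:
  assumes "mset xs = mset ys"
  shows "R (T::('d::comm_ring_1) itself) (map Y xs @ Tl) (map Y ys @ Tl)"
proof (rule perm_gen[where Q = "R T" and F = "\<lambda>xs. map Y xs @ Tl" and n = "length xs"])
  show "R T x x" for x by (rule R_refl)
  show "R T x y \<Longrightarrow> R T y z \<Longrightarrow> R T x z" for x y z by (rule R_trans)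
  show "R T (map Y (p @ a # b # q) @ Tl) (map Y (p @ b # a # q) @ Tl)" for p a b q
    using R_ctx[OF R_Y[of T a b], of "map Y p" "map Y q @ Tl"] by simp
qed (use assms in auto)

lemma R_ZpermE:
  assumes "mset xs = mset ys" "length xs \<le> Suc (length Od)"
  shows "R (T::('d::comm_ring_1) itself) (pre @ map Z (il xs Od)) (pre @ map Z (il ys Od))"
proof (rule perm_gen[where Q = "R T" and F = "\<lambda>xs. pre @ map Z (il xs Od)" and n = "length xs"])
  show "R T x x" for x by (rule R_refl)
  show "R T x y \<Longrightarrow> R T y z \<Longrightarrow> R T x z" for x y z by (rule R_trans)
  show "R T (pre @ map Z (il (p @ a # b # q) Od)) (pre @ map Z (il (p @ b # a # q) Od))"
    if "length (p @ a # b # q) = length xs" for p a b q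
  proof -
    from il_swapE[of p a b q Od] that assms(2) obtain u v r where
      h: "il (p@a#b#q) Od = u@[a,r,b]@v" "il (p@b#a#q) Od = u@[b,r,a]@v" by auto
    show ?thesis using R_ctx[OF R_Z[of T a r b], of "pre @ map Z u" "map Z v"] h by simp
  qed
qed (use assms in auto)

lemma R_ZpermO:
  assumes "mset xs = mset ys" "length xs \<le> length E"
  shows "R (T::('d::comm_ring_1) itself) (pre @ map Z (il E xs)) (pre @ map Z (il E ys))"
proof (rule perm_gen[where Q = "R T" and F = "\<lambda>xs. pre @ map Z (il E xs)" and n = "length xs"])
  show "R T x x" for x by (rule R_refl)
  show "R T x y \<Longrightarrow> R T y z \<Longrightarrow> R T x z" for x y z by (rule R_trans)
  show "R T (pre @ map Z (il E (p @ a # b # q))) (pre @ map Z (il E (p @ b # a # q)))"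
    if "length (p @ a # b # q) = length xs" for p a b q
  proof -
    from il_swapO[of p a b q E] that assms(2) obtain u v r where
      h: "il E (p@a#b#q) = u@[a,r,b]@v" "il E (p@b#a#q) = u@[b,r,a]@v" by auto
    show ?thesis using R_ctx[OF R_Z[of T a r b], of "pre @ map Z u" "map Z v"] h by simp
  qed
qed (use assms in auto)

lemma word_eq:
  "fmul (fmul (monom N) (phi_subst \<phi> (monom M))) (monom (map Z ts))
     = (monom (N @ map (rename \<phi>) M @ map Z ts) :: ('d::comm_ring_1) fa)"
  by (simp add: phi_subst_monom fmul_monom)

lemma rename_YZ: "map (rename \<phi>) (map Y as @ map Z cs) = map Y (map \<phi> as) @ map Z (map \<phi> cs)"
  by (simp add: comp_def)

theorem mainTheorem14:
  fixes M Mt :: "var list"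
  assumes "infinite (UNIV :: ('d::idom) set)"
    and "in_B M" and "in_B Mt"
    and "le_B M Mt"
  shows "\<exists>\<phi> N ts. strict_mono \<phi> \<and> in_B1 N \<and>
           fminus (fmul (fmul (monom N) (phi_subst \<phi> (monom M))) (monom (map Z ts)))
                  (monom Mt :: 'd fa) \<in> ideal_I"
proof -
  from assms(4) have cls: "(in_B1 M \<and> in_B1 Mt) \<or> (in_B2 M \<and> in_B2 Mt)"
    and ls: "le_s (xi M) (xi Mt)" by (auto simp: le_B_def)
  from ls obtain \<psi> where sm: "strict_mono \<psi>"
    and la: "\<forall>i. list_all2 (\<le>) (xi M i) (xi Mt (\<psi> i))" by (auto simp: le_s_def)
  have inj: "inj \<psi>" using sm by (rule strict_mono_imp_inj_on)
  have key: "\<exists>\<phi> N ts. strict_mono \<phi> \<and> in_B1 N \<and> R TYPE('d) (N @ map (rename \<phi>) M @ map Z ts) Mt"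
    using cls
  proof
    assume B1: "in_B1 M \<and> in_B1 Mt"
    then obtain as as' where M: "M = map Y as" and Mt: "Mt = map Y as'" by (auto simp: in_B1_def)
    have "\<forall>i. count_list as i \<le> count_list as' (\<psi> i)" using la B1 by (auto simp: xi_def M Mt)
    then obtain ns where ns: "mset (map \<psi> as @ ns) = mset as'" using sub_map[OF inj] by blast
    have "R TYPE('d) (map Y (sort ns @ map \<psi> as) @ []) (map Y as' @ [])"
      by (rule R_Yperm) (use ns in \<open>simp add: ac_simps\<close>)
    then have "R TYPE('d) (map Y (sort ns) @ map (rename \<psi>) M @ map Z []) Mt"
      by (simp add: M Mt comp_def)
    moreover have "in_B1 (map Y (sort ns))" unfolding in_B1_def by auto
    ultimately show ?thesis using sm by blast
  next
    assume B2: "in_B2 M \<and> in_B2 Mt"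
    then obtain as cs as' cs' where M: "M = map Y as @ map Z cs" and cs: "cs \<noteq> []"
      and Mt: "Mt = map Y as' @ map Z cs'" and cs': "cs' \<noteq> []" by (auto simp: in_B2_def)
    define E where "E = nths cs {j. even j}"
    define Od where "Od = nths cs {j. odd j}"
    define E' where "E' = nths cs' {j. even j}"
    define Od' where "Od' = nths cs' {j. odd j}"
    have xiM: "xi M = (\<lambda>i. [count_list as i, count_list E i, count_list Od i])"
      using not_B1[OF cs] by (simp add: xi_def M E_def Od_def)
    have xiMt: "xi Mt = (\<lambda>i. [count_list as' i, count_list E' i, count_list Od' i])"
      using not_B1[OF cs'] by (simp add: xi_def Mt E'_def Od'_def)
    have c1: "\<forall>i. count_list as i \<le> count_list as' (\<psi> i)"
      and c2: "\<forall>i. count_list E i \<le> count_list E' (\<psi> i)"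
      and c3: "\<forall>i. count_list Od i \<le> count_list Od' (\<psi> i)"
      using la unfolding xiM xiMt by auto
    obtain ns where ns: "mset (map \<psi> as @ ns) = mset as'" using sub_map[OF inj c1] by blast
    obtain E2 where E2: "mset (map \<psi> E @ E2) = mset E'" using sub_map[OF inj c2] by blast
    obtain O2 where O2: "mset (map \<psi> Od @ O2) = mset Od'" using sub_map[OF inj c3] by blast
    have sp: "cs = il E Od" "length E = length Od \<or> length E = Suc (length Od)"
      using il_nths[of cs] unfolding E_def Od_def by auto
    have sp': "cs' = il E' Od'" "length E' = length Od' \<or> length E' = Suc (length Od')"
      using il_nths[of cs'] unfolding E'_def Od'_def by auto
    define EE where "EE = map \<psi> E @ E2"
    define OOd where "OOd = map \<psi> Od @ O2"
    have lEE: "length EE = length E'" using E2 mset_eq_length unfolding EE_def by blast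
    have lOO: "length OOd = length Od'" using O2 mset_eq_length unfolding OOd_def by blast
    define ts where "ts = (if length E = length Od then il E2 O2 else il O2 E2)"
    have zw: "map \<psi> cs @ ts = il EE OOd"
    proof (cases "length E = length Od")
      case True
      then show ?thesis unfolding ts_def EE_def OOd_def sp(1) il_map
        by (simp add: il_app)
    next
      case False
      then have "length E = Suc (length Od)" using sp(2) by simp
      then show ?thesis using False unfolding ts_def EE_def OOd_def sp(1) il_map
        by (simp add: il_app2)
    qed
    have r1: "R TYPE('d) (map Y (sort ns @ map \<psi> as) @ map Z (il EE OOd)) (map Y as' @ map Z (il EE OOd))"
      by (rule R_Yperm) (use ns in \<open>simp add: ac_simps\<close>)
    have r2: "R TYPE('d) (map Y as' @ map Z (il EE OOd)) (map Y as' @ map Z (il E' OOd))"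
      by (rule R_ZpermE) (use E2 lEE lOO sp'(2) in \<open>auto simp: EE_def\<close>)
    have r3: "R TYPE('d) (map Y as' @ map Z (il E' OOd)) (map Y as' @ map Z (il E' Od'))"
      by (rule R_ZpermO) (use O2 lOO sp'(2) in \<open>auto simp: OOd_def\<close>)
    have "R TYPE('d) (map Y (sort ns @ map \<psi> as) @ map Z (il EE OOd)) Mt"
      using R_trans[OF R_trans[OF r1 r2] r3] sp'(1) Mt by simp
    moreover have "map Y (sort ns @ map \<psi> as) @ map Z (il EE OOd) = map Y (sort ns) @ map (rename \<psi>) M @ map Z ts"
      unfolding M rename_YZ zw[symmetric] by simp
    moreover have "in_B1 (map Y (sort ns))" unfolding in_B1_def by auto
    ultimately show ?thesis using sm by metis
  qed
  then show ?thesis unfolding R_def word_eq by blast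
qed


end
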